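(* Let $G=(V,E)$ be a finite graph without loops and $e=uv\in E$. Let $G-e$ be the graph obtained from $G$ by removing the edge $e$, and let $G/e$ be the contraction of $e$: $u$ and $v$ are replaced by a single new vertex $w$ whose incident edges are exactly the edges other than $e$ that were incident with $u$ or $v$. Then $$\frac{\gamma_{coe}(G-e)+\gamma_{coe}(G/e)}{2}-1\leq \gamma_{coe}(G)\leq \frac{\gamma_{coe}(G-e)+\gamma_{coe}(G/e)}{2}+2.$$
   Context: Graphs have no loops. For a graph $G=(V,E)$ and $x\in V$, $\deg(x)$ is the number of edges incident to $x$. A set $D\subseteq V$ is a dominating set if every vertex of $V\setminus D$ is adjacent to at least one vertex of $D$. A dominating set $D$ is a co-even dominating set if $\deg(x)$ is even for every $x\in V\setminus D$ (degrees taken in the graph under consideration). The co-even domination number $\gamma_{coe}(G)$ is the minimum cardinality of a co-even dominating set of $G$. *)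

theory Defs
  imports Complex_Main
begin

text \<open>Finite loopless multigraphs: vertex set V, edge set E, and an endpoint map
  ends giving each edge a 2-element set of endpoints in V.\<close>

definition mgraph :: "'v set \<Rightarrow> 'e set \<Rightarrow> ('e \<Rightarrow> 'v set) \<Rightarrow> bool" where
  "mgraph V E ends \<longleftrightarrow> finite V \<and> finite E \<and>
     (\<forall>f\<in>E. ends f \<subseteq> V \<and> card (ends f) = 2)"

definition deg :: "'e set \<Rightarrow> ('e \<Rightarrow> 'v set) \<Rightarrow> 'v \<Rightarrow> nat" where
  "deg E ends x = card {f\<in>E. x \<in> ends f}"

definition adj :: "'e set \<Rightarrow> ('e \<Rightarrow> 'v set) \<Rightarrow> 'v \<Rightarrow> 'v \<Rightarrow> bool" where
  "adj E ends x y \<longleftrightarrow> (\<exists>f\<in>E. ends f = {x, y})"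

definition dominating :: "'v set \<Rightarrow> 'e set \<Rightarrow> ('e \<Rightarrow> 'v set) \<Rightarrow> 'v set \<Rightarrow> bool" where
  "dominating V E ends D \<longleftrightarrow> D \<subseteq> V \<and> (\<forall>x\<in>V - D. \<exists>y\<in>D. adj E ends x y)"

definition coeven_dominating :: "'v set \<Rightarrow> 'e set \<Rightarrow> ('e \<Rightarrow> 'v set) \<Rightarrow> 'v set \<Rightarrow> bool" where
  "coeven_dominating V E ends D \<longleftrightarrow>
     dominating V E ends D \<and> (\<forall>x\<in>V - D. even (deg E ends x))"

definition gamma_coe :: "'v set \<Rightarrow> 'e set \<Rightarrow> ('e \<Rightarrow> 'v set) \<Rightarrow> nat" where
  "gamma_coe V E ends = Min (card ` {D. coeven_dominating V E ends D})"

definition del_edge :: "'e set \<Rightarrow> 'e \<Rightarrow> 'e set" where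
  "del_edge E e = E - {e}"

text \<open>Contraction of edge e with ends {u,v}: the merged vertex w is represented by u
  (vertex v is removed and every endpoint v is renamed to u); this is isomorphic to
  the contraction with a fresh vertex w.\<close>
definition contr_vertices :: "'v set \<Rightarrow> 'v \<Rightarrow> 'v set" where
  "contr_vertices V v = V - {v}"

definition contr_ends :: "('e \<Rightarrow> 'v set) \<Rightarrow> 'v \<Rightarrow> 'v \<Rightarrow> 'e \<Rightarrow> 'v set" where
  "contr_ends ends u v f = (\<lambda>x. if x = v then u else x) ` ends f"

end

theory Submission
  imports Defs
begin

lemma coe_fin:
  assumes "finite V"
  shows "finite {D. coeven_dominating V E ends D}"
proof -
  have "{D. coeven_dominating V E ends D} \<subseteq> Pow V"
    by (auto simp: coeven_dominating_def dominating_def)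
  thus ?thesis using assms by (meson finite_Pow_iff finite_subset)
qed

lemma coe_V: "coeven_dominating V E ends V"
  by (simp add: coeven_dominating_def dominating_def)

lemma gamma_le:
  assumes "finite V" "coeven_dominating V E ends D"
  shows "gamma_coe V E ends \<le> card D"
  unfolding gamma_coe_def using coe_fin[OF assms(1)] assms(2) by (intro Min_le) auto

lemma gamma_ex:
  assumes "finite V"
  shows "\<exists>D. coeven_dominating V E ends D \<and> card D = gamma_coe V E ends"
proof -
  have "gamma_coe V E ends \<in> card ` {D. coeven_dominating V E ends D}"
    unfolding gamma_coe_def using coe_fin[OF assms(1)] coe_V[of V E ends]
    by (intro Min_in) auto
  thus ?thesis by auto
qed

lemma card_add2:
  assumes "finite D"
  shows "card (D \<union> {u, v}) \<le> card D + 2"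
proof -
  have "card (D \<union> {u, v}) \<le> card D + card {u, v}" by (rule card_Un_le)
  moreover have "card {u, v} \<le> 2" by (simp add: card_insert_if)
  ultimately show ?thesis by linarith
qed

theorem mainTheorem7:
  fixes V :: "'v set" and E :: "'e set" and ends :: "'e \<Rightarrow> 'v set"
    and e :: 'e and u v :: 'v
  assumes "mgraph V E ends"
    and "e \<in> E" and "ends e = {u, v}"
    and "\<forall>f\<in>E - {e}. ends f \<noteq> {u, v}"
  shows "(real (gamma_coe V (del_edge E e) ends)
            + real (gamma_coe (contr_vertices V v) (del_edge E e) (contr_ends ends u v))) / 2 - 1
           \<le> real (gamma_coe V E ends) \<and>
         real (gamma_coe V E ends)
           \<le> (real (gamma_coe V (del_edge E e) ends)
            + real (gamma_coe (contr_vertices V v) (del_edge E e) (contr_ends ends u v))) / 2 + 2"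
proof -
  have finV: "finite V" and finE: "finite E" and ef: "\<And>f. f \<in> E \<Longrightarrow> ends f \<subseteq> V \<and> card (ends f) = 2"
    using assms(1) by (auto simp: mgraph_def)
  have uv: "u \<noteq> v" using ef[OF assms(2)] assms(3) by auto
  have uV: "u \<in> V" and vV: "v \<in> V" using ef[OF assms(2)] assms(3) by auto
  define ce where "ce = contr_ends ends u v"
  define E' where "E' = del_edge E e"
  define V'' where "V'' = contr_vertices V v"
  have finV'': "finite V''" using finV by (simp add: V''_def contr_vertices_def)
  have ce_x: "\<And>f x. x \<noteq> u \<Longrightarrow> x \<noteq> v \<Longrightarrow> (x \<in> ce f) = (x \<in> ends f)"
    by (auto simp: ce_def contr_ends_def)
  have ce_u: "\<And>f. (u \<in> ce f) = (u \<in> ends f \<or> v \<in> ends f)"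
    by (auto simp: ce_def contr_ends_def)
  have ce_pair: "\<And>f x y. y \<noteq> v \<Longrightarrow> x \<noteq> v \<Longrightarrow> ends f = {x, y} \<Longrightarrow> ce f = {x, y}"
    by (auto simp: ce_def contr_ends_def)
  have ce_pairv: "\<And>f x. x \<noteq> v \<Longrightarrow> ends f = {x, v} \<Longrightarrow> ce f = {x, u}"
    by (auto simp: ce_def contr_ends_def)
  have ce_back: "\<And>f x y. x \<noteq> u \<Longrightarrow> x \<noteq> v \<Longrightarrow> y \<noteq> u \<Longrightarrow> y \<noteq> v \<Longrightarrow> f \<in> E \<Longrightarrow> ce f = {x, y} \<Longrightarrow> ends f = {x, y}"
  proof -
    fix f x y assume h: "x \<noteq> u" "x \<noteq> v" "y \<noteq> u" "y \<noteq> v" "f \<in> E" "ce f = {x, y}"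
    have "u \<notin> ce f" using h by auto
    hence nuv: "u \<notin> ends f" "v \<notin> ends f" using ce_u by auto
    hence "ce f = ends f" unfolding ce_def contr_ends_def
      by (auto simp: image_iff)
    thus "ends f = {x, y}" using h by simp
  qed
  have ce_backu: "\<And>f x. x \<noteq> u \<Longrightarrow> x \<noteq> v \<Longrightarrow> f \<in> E \<Longrightarrow> ce f = {x, u} \<Longrightarrow> ends f = {x, u} \<or> ends f = {x, v}"
  proof -
    fix f x assume h: "x \<noteq> u" "x \<noteq> v" "f \<in> E" "ce f = {x, u}"
    have c2: "card (ends f) = 2" using ef[OF h(3)] by simp
    have xin: "x \<in> ends f" using ce_x[of x f] h by auto
    have sub: "ends f \<subseteq> {x, u, v}"
    proof
      fix z assume "z \<in> ends f"
      hence "(if z = v then u else z) \<in> ce f" by (auto simp: ce_def contr_ends_def)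
      thus "z \<in> {x, u, v}" using h by (auto split: if_splits)
    qed
    have "u \<in> ends f \<or> v \<in> ends f" using ce_u h by auto
    then obtain w where w: "w \<in> ends f" "w \<in> {u, v}" by auto
    have "ends f \<noteq> {x, u, v}" using c2 h uv by (auto simp: card_insert_if)
    hence "ends f = {x, w}" using sub xin w c2 h uv
      by (cases "u \<in> ends f"; cases "v \<in> ends f"; auto simp: card_insert_if; metis card_2_iff insertE singletonD)
    thus "ends f = {x, u} \<or> ends f = {x, v}" using w by auto
  qed
  have deg_del: "\<And>x. x \<noteq> u \<Longrightarrow> x \<noteq> v \<Longrightarrow> deg E' ends x = deg E ends x"
    unfolding deg_def E'_def del_edge_def using assms(3)
    by (intro arg_cong[where f=card]) auto
  have deg_con: "\<And>x. x \<noteq> u \<Longrightarrow> x \<noteq> v \<Longrightarrow> deg E' ce x = deg E ends x"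
    unfolding deg_def E'_def del_edge_def using assms(3) ce_x
    by (intro arg_cong[where f=card]) auto
  have deg_u: "even (deg E ends u) \<Longrightarrow> even (deg E ends v) \<Longrightarrow> even (deg E' ce u)"
  proof -
    assume eu: "even (deg E ends u)" and ev: "even (deg E ends v)"
    define A where "A = {f\<in>E-{e}. u \<in> ends f}"
    define B where "B = {f\<in>E-{e}. v \<in> ends f}"
    have "{f\<in>E'. u \<in> ce f} = A \<union> B" using ce_u by (auto simp: A_def B_def E'_def del_edge_def)
    moreover have "A \<inter> B = {}"
    proof (rule ccontr)
      assume "A \<inter> B \<noteq> {}"
      then obtain f where f: "f \<in> E - {e}" "u \<in> ends f" "v \<in> ends f" by (auto simp: A_def B_def)
      have "card (ends f) = 2" using ef f by auto
      hence "ends f = {u, v}" using f uv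
        by (metis card_2_iff doubleton_eq_iff insertE singletonD)
      thus False using assms(4) f by auto
    qed
    moreover have fA: "finite A" "finite B" using finE by (auto simp: A_def B_def)
    ultimately have "deg E' ce u = card A + card B" by (simp add: deg_def card_Un_disjoint)
    moreover have "card A = deg E ends u - 1"
    proof -
      have "A = {f\<in>E. u \<in> ends f} - {e}" by (auto simp: A_def)
      thus ?thesis using assms(2,3) by (simp add: deg_def)
    qed
    moreover have "card B = deg E ends v - 1"
    proof -
      have "B = {f\<in>E. v \<in> ends f} - {e}" by (auto simp: B_def)
      thus ?thesis using assms(2,3) by (simp add: deg_def)
    qed
    moreover have "deg E ends u \<ge> 1" "deg E ends v \<ge> 1"
      unfolding deg_def using finE assms(2,3)
      by (auto intro!: Suc_leI card_gt_0_iff[THEN iffD2])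
    ultimately show ?thesis using eu ev by auto
  qed
  obtain D where D: "coeven_dominating V E ends D" "card D = gamma_coe V E ends"
    using gamma_ex[OF finV] by blast
  obtain D1 where D1: "coeven_dominating V E' ends D1" "card D1 = gamma_coe V E' ends"
    using gamma_ex[OF finV] by blast
  obtain D2 where D2: "coeven_dominating V'' E' ce D2" "card D2 = gamma_coe V'' E' ce"
    using gamma_ex[OF finV''] by blast
  have finD: "finite D" using D(1) finV by (auto simp: coeven_dominating_def dominating_def intro: finite_subset)
  have finD1: "finite D1" using D1(1) finV by (auto simp: coeven_dominating_def dominating_def intro: finite_subset)
  have finD2: "finite D2" using D2(1) finV'' by (auto simp: coeven_dominating_def dominating_def intro: finite_subset)
  have s1: "gamma_coe V E' ends \<le> gamma_coe V E ends + 2"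
  proof -
    have "coeven_dominating V E' ends (D \<union> {u, v})"
      unfolding coeven_dominating_def dominating_def
    proof (intro conjI ballI)
      show "D \<union> {u, v} \<subseteq> V" using D(1) uV vV by (auto simp: coeven_dominating_def dominating_def)
    next
      fix x assume x: "x \<in> V - (D \<union> {u, v})"
      then obtain y f where "y \<in> D" "f \<in> E" "ends f = {x, y}"
        using D(1) unfolding coeven_dominating_def dominating_def adj_def by blast
      moreover have "f \<noteq> e" using calculation x assms(3) by auto
      ultimately show "\<exists>y\<in>D \<union> {u, v}. adj E' ends x y"
        by (auto simp: adj_def E'_def del_edge_def)
    next
      fix x assume x: "x \<in> V - (D \<union> {u, v})"
      thus "even (deg E' ends x)" using D(1) deg_del[of x] by (auto simp: coeven_dominating_def)
    qed
    hence "gamma_coe V E' ends \<le> card (D \<union> {u, v})" by (rule gamma_le[OF finV])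
    thus ?thesis using card_add2[OF finD, of u v] D(2) by linarith
  qed
  have s2: "gamma_coe V'' E' ce \<le> gamma_coe V E ends"
  proof (cases "u \<in> D \<or> v \<in> D")
    case True
    define D' where "D' = (D - {v}) \<union> {u}"
    have "coeven_dominating V'' E' ce D'"
      unfolding coeven_dominating_def dominating_def
    proof (intro conjI ballI)
      show "D' \<subseteq> V''" using D(1) uV uv by (auto simp: D'_def V''_def contr_vertices_def coeven_dominating_def dominating_def)
    next
      fix x assume x: "x \<in> V'' - D'"
      hence xn: "x \<noteq> u" "x \<noteq> v" "x \<in> V" "x \<notin> D" by (auto simp: D'_def V''_def contr_vertices_def)
      then obtain y f where yf: "y \<in> D" "f \<in> E" "ends f = {x, y}"
        using D(1) unfolding coeven_dominating_def dominating_def adj_def by blast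
      moreover have "f \<noteq> e" using calculation xn assms(3) by auto
      ultimately show "\<exists>y\<in>D'. adj E' ce x y"
      proof (cases "y = v")
        case True
        hence "ce f = {x, u}" using ce_pairv yf xn by auto
        thus ?thesis using \<open>f \<noteq> e\<close> yf by (auto simp: adj_def E'_def del_edge_def D'_def)
      next
        case False
        hence "ce f = {x, y}" using ce_pair yf xn by auto
        thus ?thesis using \<open>f \<noteq> e\<close> yf False by (auto simp: adj_def E'_def del_edge_def D'_def)
      qed
    next
      fix x assume x: "x \<in> V'' - D'"
      hence xn: "x \<noteq> u" "x \<noteq> v" "x \<in> V" "x \<notin> D" by (auto simp: D'_def V''_def contr_vertices_def)
      thus "even (deg E' ce x)" using D(1) deg_con[of x] by (auto simp: coeven_dominating_def)
    qed
    hence "gamma_coe V'' E' ce \<le> card D'" by (rule gamma_le[OF finV''])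
    moreover have "card D' \<le> card D"
    proof (cases "u \<in> D")
      case True
      hence "D' \<subseteq> D" by (auto simp: D'_def)
      thus ?thesis using finD card_mono by blast
    next
      case False
      hence "v \<in> D" using \<open>u \<in> D \<or> v \<in> D\<close> by auto
      have "card D' = card (D - {v}) + 1" using False finD uv by (simp add: D'_def)
      also have "\<dots> = card D" using \<open>v \<in> D\<close> finD
        by (simp add: card_Diff_singleton) (metis One_nat_def Suc_pred card_gt_0_iff empty_iff)
      finally show ?thesis by simp
    qed
    ultimately show ?thesis using D(2) by linarith
  next
    case False
    have "coeven_dominating V'' E' ce D"
      unfolding coeven_dominating_def dominating_def
    proof (intro conjI ballI)
      show "D \<subseteq> V''" using D(1) False by (auto simp: V''_def contr_vertices_def coeven_dominating_def dominating_def)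
    next
      fix x assume x: "x \<in> V'' - D"
      hence xn: "x \<noteq> v" "x \<in> V" "x \<notin> D" by (auto simp: V''_def contr_vertices_def)
      then obtain y f where yf: "y \<in> D" "f \<in> E" "ends f = {x, y}"
        using D(1) unfolding coeven_dominating_def dominating_def adj_def by blast
      moreover have "f \<noteq> e" using calculation xn assms(3) False by auto
      moreover have "y \<noteq> v" using yf False by auto
      ultimately show "\<exists>y\<in>D. adj E' ce x y"
        using ce_pair[of y x f] xn by (auto simp: adj_def E'_def del_edge_def)
    next
      fix x assume x: "x \<in> V'' - D"
      hence xn: "x \<noteq> v" "x \<in> V" "x \<notin> D" by (auto simp: V''_def contr_vertices_def)
      show "even (deg E' ce x)"
      proof (cases "x = u")
        case True
        thus ?thesis using D(1) False uV vV deg_u by (auto simp: coeven_dominating_def)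
      next
        case False
        thus ?thesis using D(1) xn deg_con[of x] by (auto simp: coeven_dominating_def)
      qed
    qed
    thus ?thesis using gamma_le[OF finV''] D(2) by metis
  qed
  have s3: "gamma_coe V E ends \<le> gamma_coe V E' ends + 2"
  proof -
    have "coeven_dominating V E ends (D1 \<union> {u, v})"
      unfolding coeven_dominating_def dominating_def
    proof (intro conjI ballI)
      show "D1 \<union> {u, v} \<subseteq> V" using D1(1) uV vV by (auto simp: coeven_dominating_def dominating_def)
    next
      fix x assume x: "x \<in> V - (D1 \<union> {u, v})"
      then obtain y f where "y \<in> D1" "f \<in> E'" "ends f = {x, y}"
        using D1(1) unfolding coeven_dominating_def dominating_def adj_def by blast
      thus "\<exists>y\<in>D1 \<union> {u, v}. adj E ends x y"
        by (auto simp: adj_def E'_def del_edge_def)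
    next
      fix x assume x: "x \<in> V - (D1 \<union> {u, v})"
      have "even (deg E' ends x)" using D1(1) x by (auto simp: coeven_dominating_def)
      thus "even (deg E ends x)" using deg_del[of x] x by auto
    qed
    hence "gamma_coe V E ends \<le> card (D1 \<union> {u, v})" by (rule gamma_le[OF finV])
    thus ?thesis using card_add2[OF finD1, of u v] D1(2) by linarith
  qed
  have s4: "gamma_coe V E ends \<le> gamma_coe V'' E' ce + 2"
  proof -
    have "coeven_dominating V E ends (D2 \<union> {u, v})"
      unfolding coeven_dominating_def dominating_def
    proof (intro conjI ballI)
      show "D2 \<union> {u, v} \<subseteq> V" using D2(1) uV vV
        by (auto simp: coeven_dominating_def dominating_def V''_def contr_vertices_def)
    next
      fix x assume x: "x \<in> V - (D2 \<union> {u, v})"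
      hence xn: "x \<noteq> u" "x \<noteq> v" "x \<in> V''" "x \<notin> D2" by (auto simp: V''_def contr_vertices_def)
      then obtain y f where yf: "y \<in> D2" "f \<in> E'" "ce f = {x, y}"
        using D2(1) unfolding coeven_dominating_def dominating_def adj_def by blast
      have yv: "y \<noteq> v" using yf D2(1) by (auto simp: coeven_dominating_def dominating_def V''_def contr_vertices_def)
      have fE: "f \<in> E" using yf by (auto simp: E'_def del_edge_def)
      show "\<exists>y\<in>D2 \<union> {u, v}. adj E ends x y"
      proof (cases "y = u")
        case True
        thus ?thesis using ce_backu[OF xn(1,2) fE] yf fE by (auto simp: adj_def)
      next
        case False
        thus ?thesis using ce_back[OF xn(1,2) False yv fE] yf fE by (auto simp: adj_def)
      qed
    next
      fix x assume x: "x \<in> V - (D2 \<union> {u, v})"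
      hence xn: "x \<noteq> u" "x \<noteq> v" "x \<in> V''" "x \<notin> D2" by (auto simp: V''_def contr_vertices_def)
      have "even (deg E' ce x)" using D2(1) xn by (auto simp: coeven_dominating_def)
      thus "even (deg E ends x)" using deg_con[of x] xn by auto
    qed
    hence "gamma_coe V E ends \<le> card (D2 \<union> {u, v})" by (rule gamma_le[OF finV])
    thus ?thesis using card_add2[OF finD2, of u v] D2(2) by linarith
  qed
  have r1: "real (gamma_coe V E' ends) \<le> real (gamma_coe V E ends) + 2"
    using s1 by (metis of_nat_add of_nat_le_iff of_nat_numeral)
  have r2: "real (gamma_coe V'' E' ce) \<le> real (gamma_coe V E ends)"
    using s2 by simp
  have r3: "real (gamma_coe V E ends) \<le> real (gamma_coe V E' ends) + 2"
    using s3 by (metis of_nat_add of_nat_le_iff of_nat_numeral)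
  have r4: "real (gamma_coe V E ends) \<le> real (gamma_coe V'' E' ce) + 2"
    using s4 by (metis of_nat_add of_nat_le_iff of_nat_numeral)
  have fin: "(real (gamma_coe V E' ends) + real (gamma_coe V'' E' ce)) / 2 - 1
     \<le> real (gamma_coe V E ends) \<and> real (gamma_coe V E ends)
     \<le> (real (gamma_coe V E' ends) + real (gamma_coe V'' E' ce)) / 2 + 2"
    apply (intro conjI)
    using r1 r2 r3 r4 by argo+
  thus ?thesis by (simp add: E'_def V''_def ce_def)
qed

end
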